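(* Let $G=(Q,A,\delta)$ be an MDP, $q\in Q$, reals $a<0<b$ and $a\le\eta\le0$, and let $v$ be an $[a,b]$-valuation that is $\eta$-bounded with respect to some $\mathrm{NZ}\subseteq Q\times A$. Then for every $n\ge1$, every $t>0$ and every strategy $\sigma$, $$\mathbb P^\sigma_q\big[G,\{\rho: s^n_v(\rho)\ge n\eta+t\}\cap\{\rho: c^n_v(\rho)=n\}\big]\le\exp\Big(-\frac{2t^2}{n(b-a)^2}\Big).$$
   Context: An MDP $G=(Q,A,\delta)$ has finite non-empty $Q,A$ and $\delta:Q\times A\to\mathcal D(Q)$; strategies are maps $\sigma:Q\cdot(A\cdot Q)^*\to\mathcal D(A)$, and $\mathbb P^\sigma_q[G,\cdot]$ is the induced probability measure on infinite runs $(Q\cdot A)^\omega$ from $q$ (cylinder of $q_0(a_1,q_1)\cdots(a_n,q_n)$ has probability $[q_0=q]\prod_i\sigma(\text{prefix up to }q_{i-1})(a_i)\delta(q_{i-1},a_i)(q_i)$). An $[a,b]$-valuation is a function $v:Q\cdot(A\cdot Q)^*\to[a,b]$. It is $\eta$-bounded w.r.t. $\mathrm{NZ}\subseteq Q\times A$ if for every finite run $\rho$ with last state $\mathrm{last}(\rho)$ and every action $\alpha$: if $(\mathrm{last}(\rho),\alpha)\notin\mathrm{NZ}$ then $v(\rho\cdot(\alpha,q'))=0$ for all $q'\in Q$; if $(\mathrm{last}(\rho),\alpha)\in\mathrm{NZ}$ then $\sum_{q'}\delta(\mathrm{last}(\rho),\alpha)(q')\,v(\rho\cdot(\alpha,q'))\le\eta$.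 For an infinite run $\rho=(q_0,a_0)(q_1,a_1)\cdots$, let $\mathrm{IndNZ}(\rho)=\{i:(q_i,a_i)\in\mathrm{NZ}\}$ and $\mathrm{IndNZ}^n(\rho)$ its $\min(n,|\mathrm{IndNZ}(\rho)|)$ smallest elements; $s^n_v(\rho):=\sum_{i\in\mathrm{IndNZ}^n(\rho)}v(q_0(a_0,q_1)\cdots(a_i,q_{i+1}))$ and $c^n_v(\rho):=|\mathrm{IndNZ}^n(\rho)|$. *)

theory Defs
  imports "HOL-Probability.Probability"
begin

(* MDP G = (Q, A, delta): Q = 'q, A = 'a (finite nonempty types), delta :: 'q => 'a => 'q pmf.
   Finite run q0 (a1,q1) ... (an,qn) is represented as (q0, [(a1,q1),...,(an,qn)]).
   Infinite run (q0,a0)(q1,a1)... is represented as rho :: nat => 'q * 'a, rho i = (q_i, a_i). *)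

type_synonym ('q,'a) frun = "'q \<times> ('a \<times> 'q) list"
type_synonym ('q,'a) irun = "nat \<Rightarrow> 'q \<times> 'a"

definition last_st :: "('q,'a) frun \<Rightarrow> 'q" where
  "last_st h = (if snd h = [] then fst h else snd (last (snd h)))"

definition ext_run :: "('q,'a) frun \<Rightarrow> 'a \<Rightarrow> 'q \<Rightarrow> ('q,'a) frun" where
  "ext_run h \<alpha> q' = (fst h, snd h @ [(\<alpha>, q')])"

definition cyl :: "('q,'a) frun \<Rightarrow> ('q,'a) irun set" where
  "cyl h = {\<rho>. fst (\<rho> 0) = fst h \<and>
     (\<forall>i < length (snd h). snd (\<rho> i) = fst (snd h ! i) \<and> fst (\<rho> (Suc i)) = snd (snd h ! i))}"

definition cyl_prob :: "('q \<Rightarrow> 'a \<Rightarrow> 'q pmf) \<Rightarrow> (('q,'a) frun \<Rightarrow> 'a pmf) \<Rightarrow> 'q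
    \<Rightarrow> ('q,'a) frun \<Rightarrow> real" where
  "cyl_prob \<delta> \<sigma> q h = (if fst h = q then 1 else 0) *
     (\<Prod>i < length (snd h).
        pmf (\<sigma> (fst h, take i (snd h))) (fst (snd h ! i)) *
        pmf (\<delta> (last_st (fst h, take i (snd h))) (fst (snd h ! i))) (snd (snd h ! i)))"

abbreviation runs_space :: "('q,'a) irun measure" where
  "runs_space \<equiv> PiM UNIV (\<lambda>_::nat. count_space (UNIV :: ('q \<times> 'a) set))"

(* M is the measure P^sigma_q[G, .]: the (unique) probability measure on runs_space
   assigning to every cylinder the prescribed probability *)
definition is_run_measure :: "('q \<Rightarrow> 'a \<Rightarrow> 'q pmf) \<Rightarrow> (('q,'a) frun \<Rightarrow> 'a pmf) \<Rightarrow> 'q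
    \<Rightarrow> ('q,'a) irun measure \<Rightarrow> bool" where
  "is_run_measure \<delta> \<sigma> q M \<longleftrightarrow> prob_space M \<and> sets M = sets runs_space \<and>
     (\<forall>h. measure M (cyl h) = cyl_prob \<delta> \<sigma> q h)"

definition is_valuation :: "real \<Rightarrow> real \<Rightarrow> (('q,'a) frun \<Rightarrow> real) \<Rightarrow> bool" where
  "is_valuation a b v \<longleftrightarrow> (\<forall>h. a \<le> v h \<and> v h \<le> b)"

definition eta_bounded :: "('q::finite \<Rightarrow> 'a \<Rightarrow> 'q pmf) \<Rightarrow> real \<Rightarrow> ('q \<times> 'a) set
    \<Rightarrow> (('q,'a) frun \<Rightarrow> real) \<Rightarrow> bool" where
  "eta_bounded \<delta> \<eta> NZ v \<longleftrightarrow> (\<forall>h \<alpha>.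
     ((last_st h, \<alpha>) \<notin> NZ \<longrightarrow> (\<forall>q'. v (ext_run h \<alpha> q') = 0)) \<and>
     ((last_st h, \<alpha>) \<in> NZ \<longrightarrow> (\<Sum>q'\<in>UNIV. pmf (\<delta> (last_st h) \<alpha>) q' * v (ext_run h \<alpha> q')) \<le> \<eta>))"

definition IndNZ :: "('q \<times> 'a) set \<Rightarrow> ('q,'a) irun \<Rightarrow> nat set" where
  "IndNZ NZ \<rho> = {i. \<rho> i \<in> NZ}"

(* the min(n, |IndNZ|) smallest elements of IndNZ *)
definition IndNZn :: "('q \<times> 'a) set \<Rightarrow> nat \<Rightarrow> ('q,'a) irun \<Rightarrow> nat set" where
  "IndNZn NZ n \<rho> = {i \<in> IndNZ NZ \<rho>. card {j \<in> IndNZ NZ \<rho>. j < i} < n}"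

(* prefix q0 (a0,q1) ... (a_i,q_{i+1}) of an infinite run *)
definition prefix_run :: "('q,'a) irun \<Rightarrow> nat \<Rightarrow> ('q,'a) frun" where
  "prefix_run \<rho> i = (fst (\<rho> 0), map (\<lambda>j. (snd (\<rho> j), fst (\<rho> (Suc j)))) [0..<Suc i])"

definition s_n :: "('q \<times> 'a) set \<Rightarrow> (('q,'a) frun \<Rightarrow> real) \<Rightarrow> nat \<Rightarrow> ('q,'a) irun \<Rightarrow> real" where
  "s_n NZ v n \<rho> = (\<Sum>i\<in>IndNZn NZ n \<rho>. v (prefix_run \<rho> i))"

definition c_n :: "('q \<times> 'a) set \<Rightarrow> nat \<Rightarrow> ('q,'a) irun \<Rightarrow> nat" where
  "c_n NZ n \<rho> = card (IndNZn NZ n \<rho>)"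

end

theory Submission imports Defs begin

definition nzf :: "('q \<times> 'a) set \<Rightarrow> ('q,'a) frun \<Rightarrow> nat \<Rightarrow> bool" where
  "nzf NZ h i = ((last_st (fst h, take i (snd h)), fst (snd h ! i)) \<in> NZ)"

definition indf :: "('q \<times> 'a) set \<Rightarrow> nat \<Rightarrow> ('q,'a) frun \<Rightarrow> nat set" where
  "indf NZ n h = {i. i < length (snd h) \<and> nzf NZ h i \<and> card {j. j < i \<and> nzf NZ h j} < n}"

definition Sf :: "('q \<times> 'a) set \<Rightarrow> nat \<Rightarrow> (('q,'a) frun \<Rightarrow> real) \<Rightarrow> ('q,'a) frun \<Rightarrow> real" where
  "Sf NZ n v h = (\<Sum>i\<in>indf NZ n h. v (fst h, take (Suc i) (snd h)))"

definition Wf :: "('q \<times> 'a) set \<Rightarrow> nat \<Rightarrow> (('q,'a) frun \<Rightarrow> real) \<Rightarrow> real \<Rightarrow> real \<Rightarrow> real \<Rightarrow> ('q,'a) frun \<Rightarrow> real" where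
  "Wf NZ n v \<eta> l c h = exp (l * (Sf NZ n v h - \<eta> * card (indf NZ n h)) - c * card (indf NZ n h))"

lemma nzf_snoc: "i < length l \<Longrightarrow> nzf NZ (q0, l @ [x]) i = nzf NZ (q0, l) i"
  unfolding nzf_def by (simp add: nth_append)

lemma nzf_snoc_last: "nzf NZ (q0, l @ [(\<alpha>, q')]) (length l) = ((last_st (q0, l), \<alpha>) \<in> NZ)"
  unfolding nzf_def by simp

lemma cnt_snoc: "i \<le> length l \<Longrightarrow> {j. j < i \<and> nzf NZ (q0, l @ [x]) j} = {j. j < i \<and> nzf NZ (q0, l) j}"
  by (rule Collect_cong) (auto simp: nzf_snoc)

definition condf :: "('q \<times> 'a) set \<Rightarrow> nat \<Rightarrow> ('q,'a) frun \<Rightarrow> 'a \<Rightarrow> bool" where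
  "condf NZ n h \<alpha> = ((last_st h, \<alpha>) \<in> NZ \<and> card {j. j < length (snd h) \<and> nzf NZ h j} < n)"

lemma indf_snoc: "indf NZ n (q0, l @ [(\<alpha>, q')]) = indf NZ n (q0, l) \<union> (if condf NZ n (q0, l) \<alpha> then {length l} else {})"
proof -
  have "i \<in> indf NZ n (q0, l @ [(\<alpha>, q')]) \<longleftrightarrow> i \<in> indf NZ n (q0, l) \<union> (if condf NZ n (q0, l) \<alpha> then {length l} else {})" for i
  proof (cases "i < length l")
    case True
    then show ?thesis unfolding indf_def using nzf_snoc[OF True] cnt_snoc[of i l] by auto
  next
    case False
    then show ?thesis unfolding indf_def condf_def using nzf_snoc_last[of NZ q0 l \<alpha> q'] cnt_snoc[of "length l" l]
      by (cases "i = length l") auto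
  qed
  then show ?thesis by blast
qed

lemma finite_indf: "finite (indf NZ n h)"
  unfolding indf_def by auto

lemma Sf_snoc: "Sf NZ n v (q0, l @ [(\<alpha>, q')]) = Sf NZ n v (q0, l) + (if condf NZ n (q0, l) \<alpha> then v (q0, l @ [(\<alpha>, q')]) else 0)"
proof -
  have le: "i \<in> indf NZ n (q0, l) \<Longrightarrow> i < length l" for i unfolding indf_def by auto
  have eq: "(\<Sum>i\<in>indf NZ n (q0, l). v (q0, take (Suc i) (l @ [(\<alpha>, q')]))) = Sf NZ n v (q0, l)"
    unfolding Sf_def by (intro sum.cong) (auto dest: le)
  show ?thesis
  proof (cases "condf NZ n (q0, l) \<alpha>")
    case True
    have "length l \<notin> indf NZ n (q0, l)" using le by auto
    then show ?thesis using True eq unfolding Sf_def[of NZ n v "(q0, l @ [(\<alpha>, q')])"] indf_snoc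
      by (simp add: finite_indf)
  next
    case False
    then show ?thesis using eq unfolding Sf_def[of NZ n v "(q0, l @ [(\<alpha>, q')])"] indf_snoc by simp
  qed
qed

lemma card_indf_snoc: "card (indf NZ n (q0, l @ [(\<alpha>, q')])) = card (indf NZ n (q0, l)) + (if condf NZ n (q0, l) \<alpha> then 1 else 0)"
proof -
  have le: "i \<in> indf NZ n (q0, l) \<Longrightarrow> i < length l" for i unfolding indf_def by auto
  then have "length l \<notin> indf NZ n (q0, l)" by auto
  then show ?thesis unfolding indf_snoc by (simp add: finite_indf)
qed

lemma Wf_snoc: "Wf NZ n v \<eta> l c (q0, xs @ [(\<alpha>, q')]) = Wf NZ n v \<eta> l c (q0, xs) *
   (if condf NZ n (q0, xs) \<alpha> then exp (l * (v (q0, xs @ [(\<alpha>, q')]) - \<eta>) - c) else 1)"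
  unfolding Wf_def Sf_snoc card_indf_snoc
  by (auto simp: exp_add[symmetric] algebra_simps)

lemma cyl_prob_snoc: "cyl_prob \<delta> \<sigma> q (q0, l @ [(\<alpha>, q')]) = cyl_prob \<delta> \<sigma> q (q0, l) * (pmf (\<sigma> (q0, l)) \<alpha> * pmf (\<delta> (last_st (q0, l)) \<alpha>) q')"
proof -
  have "(\<Prod>i<length l. pmf (\<sigma> (q0, take i (l @ [(\<alpha>, q')]))) (fst ((l @ [(\<alpha>, q')]) ! i)) *
        pmf (\<delta> (last_st (q0, take i (l @ [(\<alpha>, q')]))) (fst ((l @ [(\<alpha>, q')]) ! i))) (snd ((l @ [(\<alpha>, q')]) ! i)))
      = (\<Prod>i<length l. pmf (\<sigma> (q0, take i l)) (fst (l ! i)) *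
        pmf (\<delta> (last_st (q0, take i l)) (fst (l ! i))) (snd (l ! i)))"
    by (intro prod.cong) (auto simp: nth_append)
  then show ?thesis unfolding cyl_prob_def by (simp add: prod.lessThan_Suc algebra_simps)
qed

lemma cyl_prob_nonneg: "cyl_prob \<delta> \<sigma> q h \<ge> 0"
  unfolding cyl_prob_def by (auto intro!: prod_nonneg)

lemma hoeff_fin:
  fixes p :: "'q::finite pmf" and x :: "'q \<Rightarrow> real"
  assumes ab: "\<And>y. a \<le> x y \<and> x y \<le> b" and mean: "(\<Sum>y\<in>UNIV. pmf p y * x y) \<le> \<eta>" and l: "l > 0"
  shows "(\<Sum>y\<in>UNIV. pmf p y * exp (l * (x y - \<eta>) - l\<^sup>2 * (b - a)\<^sup>2 / 8)) \<le> 1"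
proof -
  interpret interval_bounded_random_variable "measure_pmf p" x a b
    by unfold_locales (use ab in auto)
  define m0 :: real where "m0 = measure_pmf.expectation p x"
  have mu: "m0 = (\<Sum>y\<in>UNIV. pmf p y * x y)"
    unfolding m0_def using integral_measure_pmf_real[of UNIV p x] by (simp add: mult.commute)
  have "nn_integral (measure_pmf p) (\<lambda>y. exp (l * (x y - m0))) \<le> ennreal (exp (l\<^sup>2 * (b - a)\<^sup>2 / 8))"
    unfolding m0_def by (rule Hoeffdings_lemma_nn_integral[OF l])
  moreover have "nn_integral (measure_pmf p) (\<lambda>y. exp (l * (x y - m0))) = ennreal (\<Sum>y\<in>UNIV. pmf p y * exp (l * (x y - m0)))"
    by (subst nn_integral_measure_pmf_support[where A=UNIV]) (auto simp: mult.commute sum_ennreal[symmetric] ennreal_mult)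
  ultimately have H: "(\<Sum>y\<in>UNIV. pmf p y * exp (l * (x y - m0))) \<le> exp (l\<^sup>2 * (b - a)\<^sup>2 / 8)"
    by (simp add: ennreal_le_iff2)
  have "(\<Sum>y\<in>UNIV. pmf p y * exp (l * (x y - \<eta>) - l\<^sup>2 * (b - a)\<^sup>2 / 8))
      \<le> (\<Sum>y\<in>UNIV. pmf p y * exp (l * (x y - m0)) / exp (l\<^sup>2 * (b - a)\<^sup>2 / 8))"
  proof (rule sum_mono)
    fix y
    have "l * (x y - \<eta>) \<le> l * (x y - m0)" using l mean mu by (intro mult_left_mono) auto
    then have "exp (l * (x y - \<eta>) - l\<^sup>2 * (b - a)\<^sup>2 / 8) \<le> exp (l * (x y - m0)) / exp (l\<^sup>2 * (b - a)\<^sup>2 / 8)"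
      by (simp add: exp_diff divide_right_mono)
    then show "pmf p y * exp (l * (x y - \<eta>) - l\<^sup>2 * (b - a)\<^sup>2 / 8) \<le> pmf p y * exp (l * (x y - m0)) / exp (l\<^sup>2 * (b - a)\<^sup>2 / 8)"
      by (metis mult_left_mono pmf_nonneg times_divide_eq_right)
  qed
  also have "\<dots> = (\<Sum>y\<in>UNIV. pmf p y * exp (l * (x y - m0))) / exp (l\<^sup>2 * (b - a)\<^sup>2 / 8)"
    by (simp add: sum_divide_distrib)
  also have "\<dots> \<le> 1" using H by simp
  finally show ?thesis .
qed

lemma sum_UNIV_pair: "(\<Sum>x\<in>(UNIV::('a::finite \<times> 'b::finite) set). g x) = (\<Sum>\<alpha>\<in>UNIV. \<Sum>y\<in>UNIV. g (\<alpha>, y))"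
  by (subst sum.cartesian_product) (simp add: case_prod_beta')

lemma step_ineq:
  fixes \<delta> :: "'q::finite \<Rightarrow> 'a::finite \<Rightarrow> 'q pmf"
  assumes val: "is_valuation a b v" and eb: "eta_bounded \<delta> \<eta> NZ v" and l: "l > 0"
    and c: "c = l\<^sup>2 * (b - a)\<^sup>2 / 8"
  shows "(\<Sum>x\<in>UNIV. cyl_prob \<delta> \<sigma> q (q, xs @ [x]) * Wf NZ n v \<eta> l c (q, xs @ [x]))
     \<le> cyl_prob \<delta> \<sigma> q (q, xs) * Wf NZ n v \<eta> l c (q, xs)"
proof -
  define P where "P = cyl_prob \<delta> \<sigma> q (q, xs) * Wf NZ n v \<eta> l c (q, xs)"
  define F where "F = (\<lambda>\<alpha> q'. if condf NZ n (q, xs) \<alpha> then exp (l * (v (q, xs @ [(\<alpha>, q')]) - \<eta>) - c) else 1)"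
  have P0: "P \<ge> 0" unfolding P_def Wf_def by (simp add: cyl_prob_nonneg)
  have inner: "(\<Sum>q'\<in>UNIV. pmf (\<delta> (last_st (q, xs)) \<alpha>) q' * F \<alpha> q') \<le> 1" for \<alpha>
  proof (cases "condf NZ n (q, xs) \<alpha>")
    case True
    then have nz: "(last_st (q, xs), \<alpha>) \<in> NZ" unfolding condf_def by simp
    have m: "(\<Sum>q'\<in>UNIV. pmf (\<delta> (last_st (q, xs)) \<alpha>) q' * v (q, xs @ [(\<alpha>, q')])) \<le> \<eta>"
      using eb[unfolded eta_bounded_def, rule_format, of "(q, xs)" \<alpha>] nz by (simp add: ext_run_def)
    have ab: "a \<le> v (q, xs @ [(\<alpha>, y)]) \<and> v (q, xs @ [(\<alpha>, y)]) \<le> b" for y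
      using val unfolding is_valuation_def by auto
    show ?thesis using hoeff_fin[OF ab m l] True unfolding F_def c by simp
  next
    case False
    then show ?thesis unfolding F_def by (simp add: sum_pmf_eq_1)
  qed
  have "(\<Sum>x\<in>UNIV. cyl_prob \<delta> \<sigma> q (q, xs @ [x]) * Wf NZ n v \<eta> l c (q, xs @ [x]))
      = (\<Sum>\<alpha>\<in>UNIV. \<Sum>q'\<in>UNIV. P * (pmf (\<sigma> (q, xs)) \<alpha> * (pmf (\<delta> (last_st (q, xs)) \<alpha>) q' * F \<alpha> q')))"
    unfolding sum_UNIV_pair by (intro sum.cong refl) (simp add: cyl_prob_snoc Wf_snoc F_def P_def mult_ac)
  also have "\<dots> = P * (\<Sum>\<alpha>\<in>UNIV. pmf (\<sigma> (q, xs)) \<alpha> * (\<Sum>q'\<in>UNIV. pmf (\<delta> (last_st (q, xs)) \<alpha>) q' * F \<alpha> q'))"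
    by (simp add: sum_distrib_left)
  also have "\<dots> \<le> P * (\<Sum>\<alpha>\<in>UNIV. pmf (\<sigma> (q, xs)) \<alpha> * 1)"
    by (intro mult_left_mono sum_mono P0 inner pmf_nonneg)
  also have "\<dots> = P" by (simp add: sum_pmf_eq_1)
  finally show ?thesis unfolding P_def .
qed

lemma supermart:
  fixes \<delta> :: "'q::finite \<Rightarrow> 'a::finite \<Rightarrow> 'q pmf"
  assumes val: "is_valuation a b v" and eb: "eta_bounded \<delta> \<eta> NZ v" and l: "l > 0"
    and c: "c = l\<^sup>2 * (b - a)\<^sup>2 / 8"
  shows "(\<Sum>xs\<in>{xs. length xs = K}. cyl_prob \<delta> \<sigma> q (q, xs) * Wf NZ n v \<eta> l c (q, xs)) \<le> 1"
proof (induction K)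
  case 0
  have "{xs::('a \<times> 'q) list. length xs = 0} = {[]}" by auto
  then show ?case by (simp add: cyl_prob_def Wf_def Sf_def indf_def)
next
  case (Suc K)
  let ?f = "\<lambda>xs. cyl_prob \<delta> \<sigma> q (q, xs) * Wf NZ n v \<eta> l c (q, xs)"
  have set: "{xs::('a \<times> 'q) list. length xs = Suc K} = (\<lambda>(xs, x). xs @ [x]) ` ({xs. length xs = K} \<times> UNIV)"
  proof (intro set_eqI iffI)
    fix ys :: "('a \<times> 'q) list" assume "ys \<in> {xs. length xs = Suc K}"
    then have "ys = butlast ys @ [last ys]" "length (butlast ys) = K"
      by (auto intro: append_butlast_last_id[symmetric])
    then show "ys \<in> (\<lambda>(xs, x). xs @ [x]) ` ({xs. length xs = K} \<times> UNIV)"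
      by (metis (mono_tags, lifting) SigmaI UNIV_I case_prod_conv image_eqI mem_Collect_eq)
  qed auto
  have inj: "inj_on (\<lambda>(xs, x). xs @ [x]) ({xs::('a \<times> 'q) list. length xs = K} \<times> UNIV)"
    by (auto simp: inj_on_def)
  have "(\<Sum>xs\<in>{xs. length xs = Suc K}. ?f xs) = (\<Sum>(xs, x)\<in>{xs. length xs = K} \<times> UNIV. ?f (xs @ [x]))"
    unfolding set by (subst sum.reindex[OF inj]) (simp add: case_prod_unfold)
  also have "\<dots> = (\<Sum>xs\<in>{xs. length xs = K}. \<Sum>x\<in>UNIV. ?f (xs @ [x]))"
    by (simp add: sum.cartesian_product)
  also have "\<dots> \<le> (\<Sum>xs\<in>{xs. length xs = K}. ?f xs)"
    by (intro sum_mono step_ineq[OF val eb l c])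
  also have "\<dots> \<le> 1" by (fact Suc)
  finally show ?case .
qed

lemma pred_coord[measurable]: "Measurable.pred (runs_space :: ('q,'a) irun measure) (\<lambda>\<rho>. P (\<rho> i))"
proof -
  have "(\<lambda>\<rho>. \<rho> i) \<in> measurable (runs_space :: ('q,'a) irun measure) (count_space UNIV)"
    by (rule measurable_component_singleton) simp
  moreover have "P \<in> measurable (count_space UNIV) (count_space UNIV)" by simp
  ultimately have "(\<lambda>\<rho>. \<rho> i) -` {x. P x} \<inter> space (runs_space :: ('q,'a) irun measure) \<in> sets runs_space"
    using measurable_sets[of "\<lambda>\<rho>. \<rho> i" runs_space "count_space UNIV" "{x. P x}"] by auto
  moreover have "(\<lambda>\<rho>. \<rho> i) -` {x. P x} \<inter> space (runs_space :: ('q,'a) irun measure) = {\<rho> \<in> space runs_space. P (\<rho> i)}"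
    by auto
  ultimately show ?thesis unfolding pred_def by simp
qed
lemma cyl_sets: "cyl h \<in> sets (runs_space :: ('q,'a) irun measure)"
proof -
  have "cyl h = {\<rho> \<in> space (runs_space :: ('q,'a) irun measure). (\<lambda>x. fst x = fst h) (\<rho> 0) \<and>
     (\<forall>i \<in> {..< length (snd h)}. (\<lambda>x. snd x = fst (snd h ! i)) (\<rho> i) \<and> (\<lambda>x. fst x = snd (snd h ! i)) (\<rho> (Suc i)))}"
    unfolding cyl_def by (auto simp: space_PiM)
  also have "\<dots> \<in> sets runs_space" by measurable
  finally show ?thesis .
qed

definition hK :: "('q,'a) irun \<Rightarrow> nat \<Rightarrow> ('q,'a) frun" where
  "hK \<rho> K = (fst (\<rho> 0), map (\<lambda>j. (snd (\<rho> j), fst (\<rho> (Suc j)))) [0..<K])"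

lemma take_hK: "i \<le> K \<Longrightarrow> take i (snd (hK \<rho> K)) = snd (hK \<rho> i)"
  unfolding hK_def by (simp add: take_map)

lemma last_hK: "i \<le> K \<Longrightarrow> last_st (fst (hK \<rho> K), take i (snd (hK \<rho> K))) = fst (\<rho> i)"
  unfolding take_hK by (cases i) (auto simp: hK_def last_st_def)

lemma nzf_hK: "i < K \<Longrightarrow> nzf NZ (hK \<rho> K) i = (\<rho> i \<in> NZ)"
  unfolding nzf_def using last_hK[of i K \<rho>] by (simp add: hK_def)

lemma indf_hK: "indf NZ n (hK \<rho> K) = IndNZn NZ n \<rho> \<inter> {..<K}"
proof (intro set_eqI)
  fix i
  have len: "length (snd (hK \<rho> K)) = K" by (simp add: hK_def)
  show "i \<in> indf NZ n (hK \<rho> K) \<longleftrightarrow> i \<in> IndNZn NZ n \<rho> \<inter> {..<K}"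
  proof (cases "i < K")
    case True
    have e: "{j. j < i \<and> nzf NZ (hK \<rho> K) j} = {j \<in> IndNZ NZ \<rho>. j < i}"
      unfolding IndNZ_def
    proof (intro Collect_cong)
      fix j
      show "(j < i \<and> nzf NZ (hK \<rho> K) j) = (j \<in> {i. \<rho> i \<in> NZ} \<and> j < i)"
      proof (cases "j < i")
        case True
        then have "j < K" using \<open>i < K\<close> by simp
        then show ?thesis using True nzf_hK[of j K NZ \<rho>] by simp
      qed simp
    qed
    show ?thesis unfolding indf_def IndNZn_def using True e nzf_hK[OF True, of NZ \<rho>] len
      by (simp add: IndNZ_def)
  next
    case False
    then show ?thesis unfolding indf_def using len by auto
  qed
qed

lemma Sf_hK: "Sf NZ n v (hK \<rho> K) = (\<Sum>i\<in>IndNZn NZ n \<rho> \<inter> {..<K}. v (prefix_run \<rho> i))"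
  unfolding Sf_def indf_hK
proof (intro sum.cong refl)
  fix i assume "i \<in> IndNZn NZ n \<rho> \<inter> {..<K}"
  then have "Suc i \<le> K" by auto
  then show "v (fst (hK \<rho> K), take (Suc i) (snd (hK \<rho> K))) = v (prefix_run \<rho> i)"
    unfolding take_hK[OF \<open>Suc i \<le> K\<close>] by (simp add: hK_def prefix_run_def)
qed

lemma cyl_hK: "length (snd h) = K \<Longrightarrow> \<rho> \<in> cyl h \<longleftrightarrow> hK \<rho> K = h"
proof
  assume L: "length (snd h) = K" and c: "\<rho> \<in> cyl h"
  have c0: "fst (\<rho> 0) = fst h" and ci: "\<And>i. i < K \<Longrightarrow> snd (\<rho> i) = fst (snd h ! i) \<and> fst (\<rho> (Suc i)) = snd (snd h ! i)"
    using c L unfolding cyl_def by auto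
  have "snd h = map (\<lambda>j. (snd (\<rho> j), fst (\<rho> (Suc j)))) [0..<K]"
  proof (rule nth_equalityI)
    show "length (snd h) = length (map (\<lambda>j. (snd (\<rho> j), fst (\<rho> (Suc j)))) [0..<K])" using L by simp
    fix i assume "i < length (snd h)"
    then have i: "i < K" using L by simp
    have "snd h ! i = (fst (snd h ! i), snd (snd h ! i))" by simp
    also have "\<dots> = (snd (\<rho> i), fst (\<rho> (Suc i)))" using ci[OF i] by simp
    also have "\<dots> = map (\<lambda>j. (snd (\<rho> j), fst (\<rho> (Suc j)))) [0..<K] ! i" using i by simp
    finally show "snd h ! i = map (\<lambda>j. (snd (\<rho> j), fst (\<rho> (Suc j)))) [0..<K] ! i" .
  qed
  then show "hK \<rho> K = h" using c0 unfolding hK_def by (simp add: prod_eq_iff)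
next
  assume L: "length (snd h) = K" and c: "hK \<rho> K = h"
  then have "h = (fst (\<rho> 0), map (\<lambda>j. (snd (\<rho> j), fst (\<rho> (Suc j)))) [0..<K])"
    unfolding hK_def by simp
  then have "fst h = fst (\<rho> 0)" "snd h = map (\<lambda>j. (snd (\<rho> j), fst (\<rho> (Suc j)))) [0..<K]"
    by simp_all
  then show "\<rho> \<in> cyl h" unfolding cyl_def by simp
qed

definition good :: "('q \<times> 'a) set \<Rightarrow> nat \<Rightarrow> (('q,'a) frun \<Rightarrow> real) \<Rightarrow> real \<Rightarrow> real \<Rightarrow> ('q,'a) frun \<Rightarrow> bool" where
  "good NZ n v \<eta> t h \<longleftrightarrow> card (indf NZ n h) = n \<and> real n * \<eta> + t \<le> Sf NZ n v h"

lemma BK_eq: "{\<rho>. good NZ n v \<eta> t (hK \<rho> K)} = (\<Union>h\<in>{h. length (snd h) = K \<and> good NZ n v \<eta> t h}. cyl h)"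
proof (intro set_eqI iffI)
  fix \<rho> assume "\<rho> \<in> {\<rho>. good NZ n v \<eta> t (hK \<rho> K)}"
  moreover have "length (snd (hK \<rho> K)) = K" by (simp add: hK_def)
  ultimately show "\<rho> \<in> (\<Union>h\<in>{h. length (snd h) = K \<and> good NZ n v \<eta> t h}. cyl h)"
    using cyl_hK by blast
next
  fix \<rho> assume "\<rho> \<in> (\<Union>h\<in>{h. length (snd h) = K \<and> good NZ n v \<eta> t h}. cyl h)"
  then obtain h where h: "length (snd h) = K" "good NZ n v \<eta> t h" "\<rho> \<in> cyl h" by blast
  then have "hK \<rho> K = h" using cyl_hK by blast
  then show "\<rho> \<in> {\<rho>. good NZ n v \<eta> t (hK \<rho> K)}" using h by simp
qed

lemma fin_len: "finite {xs::('b::finite) list. length xs = K}"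
  using finite_lists_length_eq[of "UNIV::'b set" K] by simp

lemma finite_G:
  fixes P :: "('q::finite,'a::finite) frun \<Rightarrow> bool"
  shows "finite {h. length (snd h) = K \<and> P h}"
proof (rule finite_subset[of _ "(UNIV::'q set) \<times> {xs :: ('a \<times> 'q) list. length xs = K}"])
  show "finite ((UNIV::'q set) \<times> {xs :: ('a \<times> 'q) list. length xs = K})"
    using fin_len[where 'b="'a \<times> 'q"] by simp
qed auto

lemma BK_mono: "good NZ n v \<eta> t (hK \<rho> K) \<Longrightarrow> good NZ n v \<eta> t (hK \<rho> (Suc K))"
proof -
  assume g: "good NZ n v \<eta> t (hK \<rho> K)"
  have "K \<notin> IndNZn NZ n \<rho>"
  proof
    assume K: "K \<in> IndNZn NZ n \<rho>"
    then have lt: "card {j \<in> IndNZ NZ \<rho>. j < K} < n" unfolding IndNZn_def by auto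
    have "IndNZn NZ n \<rho> \<inter> {..<K} \<subseteq> {j \<in> IndNZ NZ \<rho>. j < K}" unfolding IndNZn_def by auto
    then have "card (IndNZn NZ n \<rho> \<inter> {..<K}) \<le> card {j \<in> IndNZ NZ \<rho>. j < K}"
      by (intro card_mono) auto
    then show False using g lt unfolding good_def indf_hK by simp
  qed
  then have "IndNZn NZ n \<rho> \<inter> {..<Suc K} = IndNZn NZ n \<rho> \<inter> {..<K}" by (auto simp: less_Suc_eq)
  then show ?thesis using g unfolding good_def indf_hK Sf_hK by simp
qed

lemma E_sub: assumes "n \<ge> 1"
  shows "{\<rho>. s_n NZ v n \<rho> \<ge> real n * \<eta> + t} \<inter> {\<rho>. c_n NZ n \<rho> = n} \<subseteq> (\<Union>K. {\<rho>. good NZ n v \<eta> t (hK \<rho> K)})"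
proof
  fix \<rho> assume "\<rho> \<in> {\<rho>. s_n NZ v n \<rho> \<ge> real n * \<eta> + t} \<inter> {\<rho>. c_n NZ n \<rho> = n}"
  then have s: "s_n NZ v n \<rho> \<ge> real n * \<eta> + t" and c: "card (IndNZn NZ n \<rho>) = n"
    unfolding c_n_def by auto
  then have "finite (IndNZn NZ n \<rho>)" using assms by (metis card.infinite not_one_le_zero)
  then obtain K where K: "IndNZn NZ n \<rho> \<subseteq> {..<K}" using finite_nat_bounded by blast
  then have "IndNZn NZ n \<rho> \<inter> {..<K} = IndNZn NZ n \<rho>" by auto
  then have "good NZ n v \<eta> t (hK \<rho> K)" using s c unfolding good_def indf_hK Sf_hK s_n_def by simp
  then show "\<rho> \<in> (\<Union>K. {\<rho>. good NZ n v \<eta> t (hK \<rho> K)})" by blast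
qed

theorem mainTheorem12:
  fixes \<delta> :: "'q::finite \<Rightarrow> 'a::finite \<Rightarrow> 'q pmf"
    and q :: 'q and a b \<eta> t :: real and n :: nat
    and v :: "('q,'a) frun \<Rightarrow> real" and NZ :: "('q \<times> 'a) set"
    and \<sigma> :: "('q,'a) frun \<Rightarrow> 'a pmf" and M :: "('q,'a) irun measure"
  assumes "a < 0" and "0 < b" and "a \<le> \<eta>" and "\<eta> \<le> 0"
    and "is_valuation a b v"
    and "eta_bounded \<delta> \<eta> NZ v"
    and "n \<ge> 1" and "t > 0"
    and "is_run_measure \<delta> \<sigma> q M"
  shows "measure M ({\<rho>. s_n NZ v n \<rho> \<ge> real n * \<eta> + t} \<inter> {\<rho>. c_n NZ n \<rho> = n})
           \<le> exp (- (2 * t\<^sup>2) / (real n * (b - a)\<^sup>2))"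
proof -
  note val = assms(5) and eb = assms(6)
  have ps: "prob_space M" and sM: "sets M = sets runs_space" and cylM: "\<And>h. measure M (cyl h) = cyl_prob \<delta> \<sigma> q h"
    using assms(9) unfolding is_run_measure_def by auto
  interpret prob_space M by (fact ps)
  define D where "D = (b - a)\<^sup>2"
  have D: "D > 0" unfolding D_def using assms(1,2) by simp
  have n0: "real n > 0" using assms(7) by simp
  define l where "l = 4 * t / (real n * D)"
  define c where "c = l\<^sup>2 * (b - a)\<^sup>2 / 8"
  have l: "l > 0" unfolding l_def using D n0 assms(8) by simp
  define \<theta> where "\<theta> = exp (l * t - c * real n)"
  have th: "\<theta> > 0" unfolding \<theta>_def by simp
  define B where "B = (\<lambda>K. {\<rho>. good NZ n v \<eta> t (hK \<rho> K)})"
  define G where "G = (\<lambda>K. {h::('q,'a) frun. length (snd h) = K \<and> good NZ n v \<eta> t h})"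
  have finG: "finite (G K)" for K unfolding G_def by (rule finite_G)
  have BG: "B K = (\<Union>h\<in>G K. cyl h)" for K unfolding B_def G_def by (rule BK_eq)
  have Bsets: "B K \<in> sets M" for K unfolding BG sM using finG by (intro sets.finite_UN cyl_sets) auto
  have Wge: "Wf NZ n v \<eta> l c h \<ge> \<theta>" if "good NZ n v \<eta> t h" for h
  proof -
    have "real n * \<eta> + t \<le> Sf NZ n v h" using that unfolding good_def by simp
    moreover have "\<eta> * real n = real n * \<eta>" by simp
    ultimately have "t \<le> Sf NZ n v h - \<eta> * real n" by linarith
    then have "l * t \<le> l * (Sf NZ n v h - \<eta> * real n)" using l
      by (intro mult_left_mono) auto
    then show ?thesis using that unfolding Wf_def \<theta>_def good_def by simp
  qed
  have Bbound: "measure M (B K) \<le> 1 / \<theta>" for K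
  proof -
    let ?P = "cyl_prob \<delta> \<sigma> q" and ?W = "Wf NZ n v \<eta> l c"
    have "measure M (B K) \<le> (\<Sum>h\<in>G K. measure M (cyl h))"
      unfolding BG using finG by (intro finite_measure_subadditive_finite) (auto simp: sM cyl_sets)
    also have "\<dots> = (\<Sum>h\<in>G K. ?P h)" by (simp add: cylM)
    also have "\<dots> \<le> (\<Sum>h\<in>G K. ?P h * ?W h / \<theta>)"
    proof (rule sum_mono)
      fix h assume "h \<in> G K"
      then have "\<theta> \<le> ?W h" using Wge unfolding G_def by auto
      then have "?P h * \<theta> \<le> ?P h * ?W h" by (intro mult_left_mono cyl_prob_nonneg)
      then show "?P h \<le> ?P h * ?W h / \<theta>" using th by (simp add: field_simps)
    qed
    also have "\<dots> = (\<Sum>h\<in>G K \<inter> Pair q ` {xs. length xs = K}. ?P h * ?W h / \<theta>)"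
    proof (rule sum.mono_neutral_right)
      show "\<forall>h\<in>G K - G K \<inter> Pair q ` {xs. length xs = K}. ?P h * ?W h / \<theta> = 0"
      proof
        fix h assume h: "h \<in> G K - G K \<inter> Pair q ` {xs. length xs = K}"
        then have "fst h \<noteq> q" unfolding G_def by (metis (mono_tags, lifting) DiffE IntI mem_Collect_eq prod.collapse rev_image_eqI)
        then show "?P h * ?W h / \<theta> = 0" unfolding cyl_prob_def by simp
      qed
    qed (use finG in auto)
    also have "\<dots> \<le> (\<Sum>h\<in>Pair q ` {xs. length xs = K}. ?P h * ?W h / \<theta>)"
      by (intro sum_mono2 finite_imageI fin_len) (auto intro!: divide_nonneg_pos mult_nonneg_nonneg cyl_prob_nonneg th simp: Wf_def)
    also have "\<dots> = (\<Sum>xs\<in>{xs. length xs = K}. ?P (q, xs) * ?W (q, xs)) / \<theta>"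
      by (subst sum.reindex) (auto simp: inj_on_def sum_divide_distrib)
    also have "\<dots> \<le> 1 / \<theta>"
      using supermart[OF val eb l c_def] th by (intro divide_right_mono) auto
    finally show ?thesis .
  qed
  have inc: "incseq B" unfolding B_def by (intro incseq_SucI) (auto intro: BK_mono)
  have lim: "(\<lambda>K. measure M (B K)) \<longlonglongrightarrow> measure M (\<Union>K. B K)"
    by (rule finite_Lim_measure_incseq) (use Bsets inc in auto)
  have UB: "measure M (\<Union>K. B K) \<le> 1 / \<theta>"
    by (rule LIMSEQ_le_const2[OF lim]) (use Bbound in auto)
  have eq: "1 / \<theta> = exp (- (2 * t\<^sup>2) / (real n * (b - a)\<^sup>2))"
  proof -
    have "l * t - c * real n = 2 * t\<^sup>2 / (real n * D)"
      unfolding c_def l_def D_def[symmetric] using D n0 by (simp add: field_simps power2_eq_square)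
    then show ?thesis unfolding \<theta>_def D_def by (simp add: exp_minus field_simps)
  qed
  let ?E = "{\<rho>. s_n NZ v n \<rho> \<ge> real n * \<eta> + t} \<inter> {\<rho>. c_n NZ n \<rho> = n}"
  show ?thesis
  proof (cases "?E \<in> sets M")
    case True
    have "?E \<subseteq> (\<Union>K. B K)" unfolding B_def by (rule E_sub[OF assms(7)])
    then have "measure M ?E \<le> measure M (\<Union>K. B K)"
      by (intro finite_measure_mono) (use Bsets in auto)
    then show ?thesis using UB eq by simp
  next
    case False
    then show ?thesis by (simp add: measure_notin_sets)
  qed
qed

end
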